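(* Let $f\in C^1((0,1)\times\mathbb{T}^2)$. Then for all $z\in[0,1)$ and $y\in\mathbb{T}^2$, $$f(z,y)-\int_{\mathbb{T}^2}\int_0^1f(z',y')\,dz'\,dy'\le\sqrt{L(z)+L(1-z)}\,\sqrt{\int_{\mathbb{T}^2}\int_0^1 s(1-s)|\partial_sf(s,x')|^2\,ds\,dx'}+f(z,y)-\int_{\mathbb{T}^2}f(z,y')\,dy',$$ where $L(z):=-z-\ln(1-z)$.
   Context: $\mathbb{T}^2=\mathbb{R}^2/\mathbb{Z}^2$ with unit total measure. *)

theory Defs
  imports "HOL-Analysis.Analysis"
begin

text \<open>The torus T^2 = R^2/Z^2 is represented by 1-periodic functions on real \<times> real;
  integration over T^2 (unit total measure) is integration over the fundamental domain [0,1]^2.\<close>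
definition torus_dom :: "(real \<times> real) set" where
  "torus_dom = cbox (0,0) (1,1)"

definition torus_periodic :: "(real \<times> real \<Rightarrow> real) \<Rightarrow> bool" where
  "torus_periodic g \<longleftrightarrow> (\<forall>y. g (y + (1,0)) = g y \<and> g (y + (0,1)) = g y)"

definition C1_on :: "'a::euclidean_space set \<Rightarrow> ('a \<Rightarrow> real) \<Rightarrow> bool" where
  "C1_on S g \<longleftrightarrow> (\<exists>D. (\<forall>x\<in>S. (g has_derivative blinfun_apply (D x)) (at x)) \<and> continuous_on S D)"

definition L :: "real \<Rightarrow> real" where
  "L z = - z - ln (1 - z)"

end

theory Submission
  imports Defs
begin
lemma amgm: fixes u v w l :: real assumes "w > 0" "l > 0"
  shows "u * v \<le> (u^2/w)/(2*l) + l/2 * (w * v^2)"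
proof -
  have "0 \<le> (u - l * w * v)^2 / (2 * l * w)" using assms by simp
  also have "\<dots> = (u^2/w)/(2*l) + l/2 * (w * v^2) - u * v"
    using assms by (simp add: field_simps power2_eq_square)
  finally show ?thesis by simp
qed

lemma L_nonneg: "x < 1 \<Longrightarrow> 0 \<le> L x"
  using ln_le_minus_one[of "1 - x"] unfolding L_def by simp

lemma L_deriv: "t < 1 \<Longrightarrow> (L has_real_derivative t/(1-t)) (at t)"
  unfolding L_def[abs_def]
  by (rule derivative_eq_intros refl | simp)+ (simp add: field_simps)

lemma L1_deriv: "0 < t \<Longrightarrow> ((\<lambda>t. - L (1-t)) has_real_derivative (1-t)/t) (at t)"
  unfolding L_def[abs_def]
  by (rule derivative_eq_intros refl | simp)+ (simp add: field_simps)

lemma oned: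
  fixes h h' :: "real \<Rightarrow> real" and a b z l :: real
  assumes der: "\<And>t. t \<in> {a..b} \<Longrightarrow> (h has_real_derivative h' t) (at t)"
    and cont: "continuous_on {a..b} h'"
    and ab: "0 < a" "a < z" "z < b" "b < 1" and l: "l > 0"
  shows "(b-a) * h z - integral {a..b} h
     \<le> (L z + L (1-z))/(2*l) + l/2 * integral {a..b} (\<lambda>t. t*(1-t)*(h' t)^2)"
proof -
  define E where "E t = t*(1-t)*(h' t)^2" for t
  have hc: "continuous_on {a..b} h"
    by (rule continuous_at_imp_continuous_on) (use der DERIV_isCont in blast)
  have Ec: "continuous_on {a..b} E" unfolding E_def
    by (intro continuous_intros cont)
  have sub1: "{a..z} \<subseteq> {a..b}" and sub2: "{z..b} \<subseteq> {a..b}" using ab by auto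
  have hint1: "h integrable_on {a..z}" using integrable_continuous_real continuous_on_subset[OF hc sub1] by blast
  have hint2: "h integrable_on {z..b}" using integrable_continuous_real continuous_on_subset[OF hc sub2] by blast
  have Eint1: "E integrable_on {a..z}" using integrable_continuous_real continuous_on_subset[OF Ec sub1] by blast
  have Eint2: "E integrable_on {z..b}" using integrable_continuous_real continuous_on_subset[OF Ec sub2] by blast
  have P1: "((\<lambda>t. h t + (t-a) * h' t) has_integral ((z-a) * h z - (a-a) * h a)) {a..z}"
  proof (rule fundamental_theorem_of_calculus)
    show "a \<le> z" using ab by simp
    fix t assume t: "t \<in> {a..z}"
    have "((\<lambda>t. (t-a) * h t) has_real_derivative (1 * h t + (t-a) * h' t)) (at t)"
      by (intro derivative_eq_intros der) (use t ab der in auto)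
    then show "((\<lambda>t. (t-a) * h t) has_vector_derivative (h t + (t-a) * h' t)) (at t within {a..z})"
      by (simp add: has_real_derivative_iff_has_vector_derivative has_vector_derivative_at_within)
  qed
  have I1: "((\<lambda>t. (t-a) * h' t) has_integral ((z-a) * h z - integral {a..z} h)) {a..z}"
    using has_integral_diff[OF P1 integrable_integral[OF hint1]] by simp
  have P2: "((\<lambda>t. - h t + (b-t) * h' t) has_integral ((b-b) * h b - (b-z) * h z)) {z..b}"
  proof (rule fundamental_theorem_of_calculus)
    show "z \<le> b" using ab by simp
    fix t assume t: "t \<in> {z..b}"
    have "((\<lambda>t. (b-t) * h t) has_real_derivative ((0 - 1) * h t + (b-t) * h' t)) (at t)"
      by (intro derivative_eq_intros der) (use t ab der in auto)
    then show "((\<lambda>t. (b-t) * h t) has_vector_derivative (- h t + (b-t) * h' t)) (at t within {z..b})"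
      by (simp add: has_real_derivative_iff_has_vector_derivative has_vector_derivative_at_within)
  qed
  have I2: "((\<lambda>t. - ((b-t) * h' t)) has_integral ((b-z) * h z - integral {z..b} h)) {z..b}"
    using has_integral_neg[OF has_integral_add[OF P2 integrable_integral[OF hint2]]] by simp
  have Q1: "((\<lambda>t. t/(1-t)) has_integral (L z - L a)) {a..z}"
  proof (rule fundamental_theorem_of_calculus)
    show "a \<le> z" using ab by simp
    fix t assume t: "t \<in> {a..z}"
    then show "(L has_vector_derivative t/(1-t)) (at t within {a..z})"
      using L_deriv[of t] ab
      by (simp add: has_real_derivative_iff_has_vector_derivative has_vector_derivative_at_within)
  qed
  have Q2: "((\<lambda>t. (1-t)/t) has_integral (- L (1-b) - - L (1-z))) {z..b}"
  proof (rule fundamental_theorem_of_calculus)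
    show "z \<le> b" using ab by simp
    fix t assume t: "t \<in> {z..b}"
    then show "((\<lambda>t. - L (1-t)) has_vector_derivative (1-t)/t) (at t within {z..b})"
      using L1_deriv[of t] ab
      by (simp add: has_real_derivative_iff_has_vector_derivative has_vector_derivative_at_within)
  qed
  have R1: "((\<lambda>t. (t/(1-t))/(2*l) + l/2 * E t) has_integral
        ((L z - L a)/(2*l) + l/2 * integral {a..z} E)) {a..z}"
    by (intro has_integral_add has_integral_divide has_integral_mult_right Q1 integrable_integral Eint1)
  have R2: "((\<lambda>t. ((1-t)/t)/(2*l) + l/2 * E t) has_integral
        ((- L (1-b) - - L (1-z))/(2*l) + l/2 * integral {z..b} E)) {z..b}"
    by (intro has_integral_add has_integral_divide has_integral_mult_right Q2 integrable_integral Eint2)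
  have le1: "(z-a) * h z - integral {a..z} h \<le> (L z - L a)/(2*l) + l/2 * integral {a..z} E"
  proof (rule has_integral_le[OF I1 R1])
    fix t assume t: "t \<in> {a..z}"
    have w: "t*(1-t) > 0" using t ab by auto
    have "(t-a) * h' t \<le> ((t-a)^2/(t*(1-t)))/(2*l) + l/2 * (t*(1-t) * (h' t)^2)"
      by (rule amgm[OF w l])
    also have "(t-a)^2/(t*(1-t)) \<le> t^2/(t*(1-t))"
      using t ab w by (intro divide_right_mono power_mono) auto
    also have "t^2/(t*(1-t)) = t/(1-t)" using w t ab by (simp add: power2_eq_square)
    finally show "(t-a) * h' t \<le> (t/(1-t))/(2*l) + l/2 * E t"
      using l by (simp add: E_def divide_right_mono mult.assoc)
  qed
  have le2: "(b-z) * h z - integral {z..b} h \<le> (- L (1-b) - - L (1-z))/(2*l) + l/2 * integral {z..b} E"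
  proof (rule has_integral_le[OF I2 R2])
    fix t assume t: "t \<in> {z..b}"
    have w: "t*(1-t) > 0" using t ab by auto
    have "(-(b-t)) * h' t \<le> ((-(b-t))^2/(t*(1-t)))/(2*l) + l/2 * (t*(1-t) * (h' t)^2)"
      by (rule amgm[OF w l])
    also have "(-(b-t))^2/(t*(1-t)) \<le> (1-t)^2/(t*(1-t))"
    proof (rule divide_right_mono)
      have "(-(b-t))^2 = (b-t)^2" by (simp add: power2_eq_square algebra_simps)
      also have "\<dots> \<le> (1-t)^2" using t ab by (intro power_mono) auto
      finally show "(-(b-t))^2 \<le> (1-t)^2" .
    qed (use w in simp)
    also have "(1-t)^2/(t*(1-t)) = (1-t)/t" using w t ab by (simp add: power2_eq_square)
    finally show "- ((b-t) * h' t) \<le> ((1-t)/t)/(2*l) + l/2 * E t"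
      using l by (simp add: E_def divide_right_mono mult.assoc algebra_simps)
  qed
  have comb: "integral {a..z} h + integral {z..b} h = integral {a..b} h"
    using Henstock_Kurzweil_Integration.integral_combine[where f=h and a=a and c=z and b=b] ab integrable_continuous_real[OF hc] by simp
  have combE: "integral {a..z} E + integral {z..b} E = integral {a..b} E"
    using Henstock_Kurzweil_Integration.integral_combine[where f=E and a=a and c=z and b=b] ab integrable_continuous_real[OF Ec] by simp
  have La: "0 \<le> L a" "0 \<le> L (1-b)" using L_nonneg ab by auto
  have "(L z - L a)/(2*l) + (- L (1-b) - - L (1-z))/(2*l) \<le> (L z + L (1-z))/(2*l)"
    unfolding add_divide_distrib[symmetric] using La l by (intro divide_right_mono) auto
  then have "(b-a) * h z - integral {a..b} h \<le> (L z + L (1-z))/(2*l) + l/2 * integral {a..b} E"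
  proof -
    have "l/2 * integral {a..b} E = l/2 * integral {a..z} E + l/2 * integral {z..b} E"
      using combE[symmetric] by (simp add: distrib_left)
    moreover have "(b-a) * h z = (z-a) * h z + (b-z) * h z" by (simp add: algebra_simps)
    ultimately show ?thesis using le1 le2 comb \<open>(L z - L a)/(2*l) + _ \<le> _\<close> by linarith
  qed
  then show ?thesis by (simp add: E_def[abs_def])
qed

lemma sqrt_opt:
  fixes X S E :: real
  assumes S: "S \<ge> 0" and E: "E \<ge> 0" and H: "\<And>l. l > 0 \<Longrightarrow> X \<le> S/(2*l) + l/2 * E"
  shows "X \<le> sqrt S * sqrt E"
proof (cases "S > 0 \<and> E > 0")
  case True
  define l where "l = sqrt S / sqrt E"
  have l: "l > 0" using True by (simp add: l_def)
  have "S/(2*l) = sqrt S * sqrt E / 2" using True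
    by (simp add: l_def field_simps)
  moreover have "l/2 * E = sqrt S * sqrt E / 2" using True
    by (simp add: l_def field_simps)
  ultimately show ?thesis using H[OF l] by simp
next
  case False
  then have z: "S = 0 \<or> E = 0" using S E by auto
  have "X \<le> 0"
  proof (rule ccontr)
    assume X: "\<not> X \<le> 0"
    show False
    proof (cases "S = 0")
      case True
      show False
      proof (cases "E = 0")
        case True
        then show False using H[of 1] \<open>S = 0\<close> X by simp
      next
        case False
        then have "E > 0" using E by simp
        have "X \<le> S/(2*(X/E)) + (X/E)/2 * E" using H[of "X/E"] X \<open>E > 0\<close> by simp
        then show False using \<open>S = 0\<close> X \<open>E > 0\<close> by simp
      qed
    next
      case False
      then have "S > 0" "E = 0" using S z by auto
      have "X \<le> S/(2*(S/X)) + (S/X)/2 * E" using H[of "S/X"] X \<open>S > 0\<close> by simp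
      then show False using \<open>S > 0\<close> \<open>E = 0\<close> X by simp
    qed
  qed
  then show ?thesis using z by auto
qed

theorem lemma2p5:
  fixes f :: "real \<Rightarrow> real \<times> real \<Rightarrow> real" and z :: real and y :: "real \<times> real"
  assumes C1: "C1_on ({0<..<1} \<times> UNIV) (\<lambda>p. f (fst p) (snd p))"
    and per: "\<And>s. s \<in> {0<..<1} \<Longrightarrow> torus_periodic (f s)"
    and int_f: "(\<lambda>p. f (fst p) (snd p)) integrable_on ({0<..<1} \<times> torus_dom)"
    and int_E: "(\<lambda>p. fst p * (1 - fst p) * \<bar>deriv (\<lambda>t. f t (snd p)) (fst p)\<bar>^2)
                  integrable_on ({0<..<1} \<times> torus_dom)"
    and z: "0 < z" "z < 1"
  shows "f z y - integral ({0<..<1} \<times> torus_dom) (\<lambda>p. f (fst p) (snd p))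
         \<le> sqrt (L z + L (1 - z))
             * sqrt (integral ({0<..<1} \<times> torus_dom)
                 (\<lambda>p. fst p * (1 - fst p) * \<bar>deriv (\<lambda>t. f t (snd p)) (fst p)\<bar>^2))
           + f z y - integral torus_dom (\<lambda>y'. f z y')"
proof -
  define F where "F = (\<lambda>p. f (fst p) (snd p))"
  define Ef where "Ef = (\<lambda>p. fst p * (1 - fst p) * \<bar>deriv (\<lambda>t. f t (snd p)) (fst p)\<bar>^2)"
  define U where "U = {0<..<(1::real)} \<times> torus_dom"
  define S where "S = L z + L (1-z)"
  define C where "C = integral torus_dom (\<lambda>y'. f z y')"
  define I where "I = integral U F"
  define Et where "Et = integral U Ef"
  define V where "V = {0<..<(1::real)} \<times> (UNIV :: (real \<times> real) set)"
  obtain Dv where Dd: "\<And>x. x \<in> V \<Longrightarrow> (F has_derivative blinfun_apply (Dv x)) (at x)"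
    and Dc: "continuous_on V Dv"
    using C1 unfolding C1_on_def F_def V_def by blast
  define g where "g p = blinfun_apply (Dv p) (1,0)" for p
  have gc: "continuous_on V g" unfolding g_def by (intro continuous_intros Dc)
  have hder: "((\<lambda>t. f t y) has_real_derivative g (s,y)) (at s)" if s: "s \<in> {0<..<1}" for s y
  proof -
    have 1: "((\<lambda>t. (t,y)) has_derivative (\<lambda>h. (h,0))) (at s)"
      by (intro derivative_eq_intros) auto
    have 2: "(F has_derivative blinfun_apply (Dv (s,y))) (at ((\<lambda>t. (t,y)) s))"
      using Dd s by (simp add: V_def)
    have 3: "blinfun_apply (Dv (s,y)) \<circ> (\<lambda>h. (h,0)) = (\<lambda>h. g (s,y) * h)"
    proof
      fix h :: real
      have "(h, 0::real\<times>real) = h *\<^sub>R (1,0)" by simp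
      then show "(blinfun_apply (Dv (s,y)) \<circ> (\<lambda>h. (h,0))) h = g (s,y) * h"
        by (simp add: g_def blinfun.scaleR_right del: scaleR_Pair)
    qed
    from diff_chain_at[OF 1 2] 3 show ?thesis
      by (simp add: has_field_derivative_def F_def o_def)
  qed
  have derivg: "deriv (\<lambda>t. f t y) s = g (s,y)" if "s \<in> {0<..<1}" for s y
    using DERIV_imp_deriv[OF hder[OF that]] .
  have Fc: "continuous_on V F"
    by (rule continuous_at_imp_continuous_on) (use Dd has_derivative_continuous in blast)
  define Gf where "Gf p = fst p * (1 - fst p) * (g p)^2" for p
  have Gc: "continuous_on V Gf" unfolding Gf_def by (intro continuous_intros gc)
  have EG: "Ef p = Gf p" if "p \<in> V" for p
    using that derivg[of "fst p" "snd p"] by (auto simp: Ef_def Gf_def V_def)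
  have S0: "S \<ge> 0" using L_nonneg z by (simp add: S_def)

  have Dsq: "torus_dom = cbox (0,0) (1,1)" by (simp add: torus_dom_def)
  have contD: "Henstock_Kurzweil_Integration.content torus_dom = 1" by (simp add: torus_dom_def content_Pair)
  have trunc: "(b-a) * C - integral (cbox (a,(0,0)) (b,(1,1))) F
      \<le> S/(2*l) + l/2 * integral (cbox (a,(0,0)) (b,(1,1))) Ef"
    if ab: "0 < a" "a < z" "z < b" "b < 1" and l: "l > 0" for a b l
  proof -
    define Bx where "Bx = cbox (a,((0::real),(0::real))) (b,(1,1))"
    have Bx_eq: "Bx = {a..b} \<times> torus_dom" by (simp add: Bx_def cbox_Pair_eq torus_dom_def)
    have sub: "Bx \<subseteq> V" using ab by (auto simp: Bx_eq V_def)
    have FcB: "continuous_on Bx F" using continuous_on_subset[OF Fc sub] .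
    have GcB: "continuous_on Bx Gf" using continuous_on_subset[OF Gc sub] .
    have FcB': "continuous_on (cbox (a,(0,0)) (b,(1,1))) (\<lambda>(x, y). f x y)"
      using FcB by (simp add: Bx_def F_def case_prod_beta')
    have GcB': "continuous_on (cbox (a,(0,0)) (b,(1,1))) (\<lambda>(x, y). x * (1-x) * (g (x,y))^2)"
      using GcB by (simp add: Bx_def Gf_def case_prod_beta')
    have i1: "integral Bx F = integral torus_dom (\<lambda>y. integral {a..b} (\<lambda>s. f s y))"
    proof -
      have "integral Bx F = integral (cbox a b) (\<lambda>x. integral (cbox (0,0) (1,1)) (\<lambda>y. F (x,y)))"
        unfolding Bx_def by (rule integral_prod_continuous) (use FcB in \<open>simp add: Bx_def\<close>)
      also have "\<dots> = integral (cbox (0,0) (1,1)) (\<lambda>y. integral (cbox a b) (\<lambda>x. f x y))"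
        using integral_swap_continuous[OF FcB'] by (simp add: F_def)
      finally show ?thesis by (simp add: torus_dom_def)
    qed
    have i2: "integral Bx Ef = integral torus_dom (\<lambda>y. integral {a..b} (\<lambda>s. s * (1-s) * (g (s,y))^2))"
    proof -
      have "integral Bx Ef = integral Bx Gf"
        by (rule integral_cong) (use EG sub in auto)
      also have "\<dots> = integral (cbox a b) (\<lambda>x. integral (cbox (0,0) (1,1)) (\<lambda>y. Gf (x,y)))"
        unfolding Bx_def by (rule integral_prod_continuous) (use GcB in \<open>simp add: Bx_def\<close>)
      also have "\<dots> = integral (cbox (0,0) (1,1)) (\<lambda>y. integral (cbox a b) (\<lambda>x. x * (1-x) * (g (x,y))^2))"
        using integral_swap_continuous[OF GcB'] by (simp add: Gf_def)
      finally show ?thesis by (simp add: torus_dom_def)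
    qed
    have pw: "(b-a) * f z y - integral {a..b} (\<lambda>s. f s y)
        \<le> S/(2*l) + l/2 * integral {a..b} (\<lambda>s. s * (1-s) * (g (s,y))^2)" if "y \<in> torus_dom" for y
      unfolding S_def
    proof (rule oned[OF _ _ ab l])
      fix t assume "t \<in> {a..b}"
      then show "((\<lambda>t. f t y) has_real_derivative g (t,y)) (at t)" using ab by (intro hder) auto
    next
      show "continuous_on {a..b} (\<lambda>t. g (t,y))"
        by (rule continuous_on_compose2[OF gc]) (use ab in \<open>auto intro!: continuous_intros simp: V_def\<close>)
    qed
    have c1: "continuous_on torus_dom (\<lambda>y. f z y)"
    proof -
      have "continuous_on torus_dom (\<lambda>y. (z,y))" by (intro continuous_intros)
      moreover have "(\<lambda>y. (z,y)) ` torus_dom \<subseteq> V" using z by (auto simp: V_def)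
      ultimately show ?thesis
        using continuous_on_compose2[OF Fc, of torus_dom "\<lambda>y. (z,y)"]
        by (simp add: F_def)
    qed
    have c2: "continuous_on torus_dom (\<lambda>y. integral (cbox a b) (\<lambda>s. f s y))"
    proof (rule integral_continuous_on_param)
      show "continuous_on (torus_dom \<times> cbox a b) (\<lambda>(y, s). f s y)"
      proof -
        have "continuous_on (torus_dom \<times> cbox a b) (\<lambda>p. (snd p, fst p))" by (intro continuous_intros)
        moreover have "(\<lambda>p. (snd p, fst p)) ` (torus_dom \<times> cbox a b) \<subseteq> V" using ab by (auto simp: V_def)
        ultimately show ?thesis
          using continuous_on_compose2[OF Fc, of "torus_dom \<times> cbox a b" "\<lambda>p. (snd p, fst p)"]
          by (simp add: F_def case_prod_beta')
      qed
    qed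
    have c3: "continuous_on torus_dom (\<lambda>y. integral (cbox a b) (\<lambda>s. s * (1-s) * (g (s,y))^2))"
    proof (rule integral_continuous_on_param)
      show "continuous_on (torus_dom \<times> cbox a b) (\<lambda>(y, s). s * (1-s) * (g (s,y))^2)"
      proof -
        have "continuous_on (torus_dom \<times> cbox a b) (\<lambda>p. (snd p, fst p))" by (intro continuous_intros)
        moreover have "(\<lambda>p. (snd p, fst p)) ` (torus_dom \<times> cbox a b) \<subseteq> V" using ab by (auto simp: V_def)
        ultimately show ?thesis
          using continuous_on_compose2[OF Gc, of "torus_dom \<times> cbox a b" "\<lambda>p. (snd p, fst p)"]
          by (simp add: Gf_def case_prod_beta')
      qed
    qed
    have int1: "(\<lambda>y. f z y) integrable_on torus_dom" unfolding torus_dom_def by (rule integrable_continuous) (use c1 in \<open>simp add: torus_dom_def\<close>)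
    have int2: "(\<lambda>y. integral {a..b} (\<lambda>s. f s y)) integrable_on torus_dom"
      unfolding torus_dom_def by (rule integrable_continuous) (use c2 in \<open>simp add: torus_dom_def\<close>)
    have int3: "(\<lambda>y. integral {a..b} (\<lambda>s. s * (1-s) * (g (s,y))^2)) integrable_on torus_dom"
      unfolding torus_dom_def by (rule integrable_continuous) (use c3 in \<open>simp add: torus_dom_def\<close>)
    have L1: "((\<lambda>y. (b-a) * f z y - integral {a..b} (\<lambda>s. f s y)) has_integral
        ((b-a) * C - integral Bx F)) torus_dom"
      using has_integral_diff[OF has_integral_mult_right[OF integrable_integral[OF int1], of "b-a"] integrable_integral[OF int2]]
      unfolding i1 C_def by simp
    have constI: "((\<lambda>y. S/(2*l)) has_integral S/(2*l)) torus_dom"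
      using has_integral_const[of "S/(2*l)" "(0::real,0::real)" "(1,1)"] contD Dsq by simp
    have R1: "((\<lambda>y. S/(2*l) + l/2 * integral {a..b} (\<lambda>s. s * (1-s) * (g (s,y))^2)) has_integral
        (S/(2*l) + l/2 * integral Bx Ef)) torus_dom"
      using has_integral_add[OF constI has_integral_mult_right[OF integrable_integral[OF int3], of "l/2"]]
      unfolding i2 by simp
    have "(b-a) * C - integral Bx F \<le> S/(2*l) + l/2 * integral Bx Ef"
      by (rule has_integral_le[OF L1 R1]) (rule pw)
    then show ?thesis by (simp add: Bx_def)
  qed

  define B where "B = cbox (0::real,((0::real),(0::real))) (1,(1,1))"
  have B_eq: "B = {0..1} \<times> torus_dom" by (simp add: B_def cbox_Pair_eq torus_dom_def)
  have UB: "U \<subseteq> B" by (auto simp: U_def B_eq)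
  have basis: "(1::real, (0::real,0::real)) \<in> Basis" by (simp add: Basis_prod_def zero_prod_def)
  have negl: "negligible (B - U)"
  proof (rule negligible_subset)
    show "negligible ({x. x \<bullet> (1::real, (0::real,0::real)) = 0} \<union> {x. x \<bullet> (1::real, (0::real,0::real)) = 1})"
      using negligible_standard_hyperplane[OF basis] by (intro negligible_Un) auto
    show "B - U \<subseteq> {x. x \<bullet> (1::real, (0::real,0::real)) = 0} \<union> {x. x \<bullet> (1::real, (0::real,0::real)) = 1}"
      by (auto simp: B_eq U_def inner_Pair)
  qed
  have FU: "F integrable_on U" using int_f by (simp add: F_def U_def)
  have EU: "Ef integrable_on U" using int_E by (simp add: Ef_def U_def)
  have n1: "negligible {x \<in> U - B. F x \<noteq> 0}"
  proof -
    have "{x \<in> U - B. F x \<noteq> 0} = {}" using UB by auto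
    then show ?thesis by (metis negligible_empty)
  qed
  have n2: "negligible {x \<in> B - U. F x \<noteq> 0}"
    by (rule negligible_subset[OF negl]) auto
  have FB: "F integrable_on B" by (rule integrable_spike_set[OF FU n1 n2])
  have IB: "I = integral B F"
    unfolding I_def by (rule integral_spike_set[OF n1 n2])
  have Et0: "Et \<ge> 0" unfolding Et_def
    by (rule integral_nonneg[OF EU]) (auto simp: Ef_def U_def)
  have main: "C - I \<le> S/(2*l) + l/2 * Et" if l: "l > 0" for l
  proof (rule field_le_epsilon)
    fix e :: real assume e: "e > 0"
    have c0: "(0::real,((0::real),(0::real))) \<in> B" "(1::real,((1::real),(1::real))) \<in> B"
      by (auto simp: B_def)
    have e2: "0 < e/2" using e by simp
    obtain d where d: "0 < d" and dH: "\<And>c' d'. \<lbrakk>c' \<in> B; d' \<in> B;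
        norm (c' - (0,(0,0))) \<le> d; norm (d' - (1,(1,1))) \<le> d\<rbrakk> \<Longrightarrow>
        norm (integral (cbox c' d') F - integral (cbox (0,(0,0)) (1,(1,1))) F) < e/2"
      unfolding B_def
      by (rule indefinite_integral_continuous[OF FB[unfolded B_def] c0[unfolded B_def] e2]) blast
    define n where "n = min (min d (z/2)) (min ((1-z)/2) (e/(4*(\<bar>C\<bar>+1))))"
    have n0: "n > 0" using d z e by (simp add: n_def)
    have nd: "n \<le> d" "n \<le> z/2" "n \<le> (1-z)/2" "n \<le> e/(4*(\<bar>C\<bar>+1))" unfolding n_def by (simp_all only: min_le_iff_disj order_refl simp_thms)
    have ab1: "0 < n" using n0 .
    have ab2: "n < z" using nd(2) z by linarith
    have ab3: "z < 1 - n" using nd(3) n0 z by argo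
    have ab4: "1 - n < 1" using n0 by linarith
    note ab = ab1 ab2 ab3 ab4
    define Bx where "Bx = cbox (n,((0::real),(0::real))) (1-n,(1,1))"
    have T: "(1 - n - n) * C - integral Bx F \<le> S/(2*l) + l/2 * integral Bx Ef"
      using trunc[OF ab l] by (simp add: Bx_def)
    have BxU: "Bx \<subseteq> U" using ab by (auto simp: Bx_def cbox_Pair_eq U_def torus_dom_def)
    have EBx: "Ef integrable_on Bx"
    proof -
      have "Bx \<subseteq> V" using BxU by (auto simp: U_def V_def)
      then have "Gf integrable_on Bx"
        unfolding Bx_def by (intro integrable_continuous) (use continuous_on_subset[OF Gc] Bx_def in auto)
      then show ?thesis by (rule integrable_eq) (use EG \<open>Bx \<subseteq> V\<close> in auto)
    qed
    have Ele: "integral Bx Ef \<le> Et"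
      unfolding Et_def by (rule integral_subset_le[OF BxU EBx EU]) (auto simp: Ef_def U_def)
    have close: "norm (integral Bx F - integral B F) < e/2"
    proof -
      have m1: "(n, (0::real), (0::real)) \<in> B" "(1 - n, (1::real), (1::real)) \<in> B" using ab by (auto simp: B_def)
      have m2: "norm ((n, 0, 0) - (0::real, 0::real, 0::real)) \<le> d" using nd n0 by simp
      have m3: "norm ((1 - n, 1, 1) - (1::real, 1::real, 1::real)) \<le> d" using nd n0 by simp
      show ?thesis using dH[OF m1 m2 m3] by (simp add: Bx_def B_def)
    qed
    have Cn: "2 * n * \<bar>C\<bar> \<le> e/2"
    proof -
      have "2 * n * \<bar>C\<bar> \<le> 2 * (e/(4*(\<bar>C\<bar>+1))) * \<bar>C\<bar>"
        using nd n0 by (intro mult_right_mono) auto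
      also have "\<dots> = (e/2) * (\<bar>C\<bar>/(\<bar>C\<bar>+1))" by (simp add: field_simps)
      also have "\<dots> \<le> e/2" using e by (intro mult_left_le) auto
      finally show ?thesis .
    qed
    have "C - I = ((1 - n - n) * C - integral Bx F) + 2 * n * C + (integral Bx F - integral B F)"
      using IB by (simp add: algebra_simps)
    also have "\<dots> \<le> (S/(2*l) + l/2 * Et) + e/2 + e/2"
    proof -
      have "l/2 * integral Bx Ef \<le> l/2 * Et" using Ele l by simp
      moreover have "2 * n * C \<le> e/2" using Cn n0 by (smt (verit) abs_ge_self mult_left_mono)
      moreover have "integral Bx F - integral B F \<le> e/2" using close abs_ge_self[of "integral Bx F - integral B F"] unfolding real_norm_def by linarith
      ultimately show ?thesis using T by linarith
    qed
    finally show "C - I \<le> S/(2*l) + l/2 * Et + e" by simp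
  qed
  have "C - I \<le> sqrt S * sqrt Et"
    by (rule sqrt_opt[OF S0 Et0 main])
  then show ?thesis
    unfolding C_def I_def Et_def S_def U_def F_def Ef_def by simp
qed
end
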